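(* Let $G$ be a locally compact group, $K$ a compact subgroup with normalized Haar measure $dk$, $\chi$ a continuous unitary character of $K$, $\delta>0$, and $\mu$ a bounded continuous character of $G$. Let $f\in\mathcal{C}(G)$ satisfy $f(kxh)=\chi(k)f(x)\chi(h)$ for all $k,h\in K$, $x\in G$, and $$\Big|\int_K f(xky)\overline{\chi(k)}\,dk+\mu(y)\int_K f(xky^{-1})\overline{\chi(k)}\,dk-2f(x)f(y)\Big|\le\delta\quad\text{for all }x,y\in G.$$ Then either $f$ is bounded or $f$ satisfies $\int_K f(xky)\overline{\chi(k)}\,dk+\mu(y)\int_K f(xky^{-1})\overline{\chi(k)}\,dk=2f(x)f(y)$ for all $x,y\in G$.
   Context: A character of $G$ is a continuous homomorphism $G\to\mathbb{C}\setminus\{0\}$; a unitary character of $K$ is a continuous homomorphism $K\to\{z\in\mathbb{C}:|z|=1\}$. *)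

theory Defs
  imports "HOL-Analysis.Analysis"
begin

text \<open>A (possibly non-commutative) group written additively via the class group_add,
  with its type topology making it a Hausdorff locally compact topological group.\<close>
definition lc_group :: "('g::{t2_space, group_add}) itself \<Rightarrow> bool" where
  "lc_group _ \<longleftrightarrow>
     continuous_on UNIV (\<lambda>p::'g \<times> 'g. fst p + snd p) \<and>
     continuous_on UNIV (\<lambda>x::'g. - x) \<and>
     locally_compact_space (euclidean :: 'g topology)"

definition compact_subgroup :: "'g::{topological_space, group_add} set \<Rightarrow> bool" where
  "compact_subgroup K \<longleftrightarrow> compact K \<and> 0 \<in> K \<and>
     (\<forall>a\<in>K. \<forall>b\<in>K. a + b \<in> K) \<and> (\<forall>a\<in>K. - a \<in> K)"

definition normalized_haar :: "'g::{topological_space, group_add} set \<Rightarrow> 'g measure \<Rightarrow> bool" where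
  "normalized_haar K m \<longleftrightarrow> space m = K \<and> sets m = sets (restrict_space borel K) \<and>
     emeasure m K = 1 \<and>
     (\<forall>k\<in>K. \<forall>A\<in>sets m. emeasure m ((\<lambda>x. k + x) ` A) = emeasure m A) \<and>
     (\<forall>k\<in>K. \<forall>A\<in>sets m. emeasure m ((\<lambda>x. x + k) ` A) = emeasure m A)"

definition unitary_character_on :: "'g::{topological_space, group_add} set \<Rightarrow> ('g \<Rightarrow> complex) \<Rightarrow> bool" where
  "unitary_character_on K chi \<longleftrightarrow> continuous_on K chi \<and> (\<forall>k\<in>K. cmod (chi k) = 1) \<and>
     (\<forall>a\<in>K. \<forall>b\<in>K. chi (a + b) = chi a * chi b)"

definition group_character :: "('g::{topological_space, group_add} \<Rightarrow> complex) \<Rightarrow> bool" where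
  "group_character mu \<longleftrightarrow> continuous_on UNIV mu \<and> (\<forall>x. mu x \<noteq> 0) \<and>
     (\<forall>x y. mu (x + y) = mu x * mu y)"

end

theory Submission
  imports Defs "HOL-Probability.Probability_Measure"
begin


lemma cont_add_g:
  assumes "lc_group TYPE('g::{t2_space, group_add})"
    and "continuous_on S u" "continuous_on S v"
  shows "continuous_on S (\<lambda>x. (u x::'g) + v x)"
proof -
  have "continuous_on UNIV (\<lambda>p::'g \<times> 'g. fst p + snd p)" using assms(1) by (simp add: lc_group_def)
  from continuous_on_compose2[OF this continuous_on_Pair[OF assms(2,3)]]
  show ?thesis by simp
qed

lemma cont_neg_g:
  assumes "lc_group TYPE('g::{t2_space, group_add})"
    and "continuous_on S u"
  shows "continuous_on S (\<lambda>x. - (u x::'g))"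
proof -
  have "continuous_on UNIV (\<lambda>x::'g. - x)" using assms(1) by (simp add: lc_group_def)
  from continuous_on_compose2[OF this assms(2)]
  show ?thesis by simp
qed

primrec apx :: "('a \<Rightarrow> 'a set) \<Rightarrow> 'a list \<Rightarrow> ('a \<times> 'a \<Rightarrow> 'c::zero) \<Rightarrow> 'a \<times> 'a \<Rightarrow> 'c" where
  "apx C [] g p = 0"
| "apx C (s # ss) g p = (if fst p \<in> C s then g (s, snd p) else apx C ss g p)"

locale haarK =
  fixes K :: "'g::{t2_space, group_add} set" and m :: "'g measure"
  assumes lc: "lc_group TYPE('g)"
    and sub: "compact_subgroup K"
    and haar: "normalized_haar K m"
begin

lemma K_compact: "compact K" using sub by (simp add: compact_subgroup_def)
lemma K0: "0 \<in> K" using sub by (simp add: compact_subgroup_def)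
lemma K_add: "a \<in> K \<Longrightarrow> b \<in> K \<Longrightarrow> a + b \<in> K" using sub by (simp add: compact_subgroup_def)
lemma K_neg: "a \<in> K \<Longrightarrow> - a \<in> K" using sub by (simp add: compact_subgroup_def)
lemma K_diff: "a \<in> K \<Longrightarrow> b \<in> K \<Longrightarrow> a - b \<in> K" using K_add K_neg by (metis diff_conv_add_uminus)
lemma space_m[simp]: "space m = K" using haar by (simp add: normalized_haar_def)
lemma sets_m: "sets m = sets (restrict_space borel K)" using haar by (simp add: normalized_haar_def)
lemma m_K: "emeasure m K = 1" using haar by (simp add: normalized_haar_def)

lemma prob: "prob_space m"
  by (rule prob_spaceI) (simp add: m_K)

sublocale P: pair_prob_space m m
  by (simp add: pair_prob_space_def pair_sigma_finite_def prob prob_space_imp_sigma_finite)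

lemma cont_meas:
  fixes \<phi> :: "'g \<Rightarrow> 'b::topological_space"
  assumes "continuous_on K \<phi>"
  shows "\<phi> \<in> borel_measurable m"
  using borel_measurable_continuous_on_restrict[OF assms] measurable_cong_sets[OF sets_m refl]
  by blast

lemma cont_int:
  fixes \<phi> :: "'g \<Rightarrow> complex"
  assumes "continuous_on K \<phi>"
  shows "integrable m \<phi>"
proof -
  have "compact (\<phi> ` K)" using compact_continuous_image[OF assms K_compact] .
  then obtain B where "\<forall>y\<in>\<phi> ` K. norm y \<le> B" using compact_imp_bounded bounded_iff by metis
  then show ?thesis
    by (intro P.M1.integrable_const_bound[where B=B] cont_meas assms) auto
qed

lemma int_bound:
  fixes g :: "'g \<Rightarrow> complex"
  assumes "\<forall>k\<in>K. norm (g k) \<le> C" "C \<ge> 0"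
  shows "norm (integral\<^sup>L m g) \<le> C"
proof (cases "integrable m g")
  case True
  have "norm (integral\<^sup>L m g) \<le> integral\<^sup>L m (\<lambda>k. norm (g k))" by (rule integral_norm_bound)
  also have "\<dots> \<le> integral\<^sup>L m (\<lambda>k. C)"
    using assms True by (intro integral_mono) auto
  also have "\<dots> = C" using P.M1.prob_space by simp
  finally show ?thesis .
next
  case False then show ?thesis using assms by (simp add: not_integrable_integral_eq)
qed

lemma int_diff_bound:
  fixes g h :: "'g \<Rightarrow> complex"
  assumes "integrable m g" "integrable m h" "\<forall>k\<in>K. norm (g k - h k) \<le> C" "C \<ge> 0"
  shows "norm (integral\<^sup>L m g - integral\<^sup>L m h) \<le> C"
  using int_bound[OF assms(3,4)] assms(1,2) by simp

lemma cont_const_add: "continuous_on S (\<lambda>x::'g. x + h)" "continuous_on S (\<lambda>x::'g. h + x)"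
  by (intro cont_add_g[OF lc] continuous_on_id continuous_on_const)+

lemma tr_meas:
  assumes "h \<in> K"
  shows "(\<lambda>x. x + h) \<in> measurable m m" "(\<lambda>x. h + x) \<in> measurable m m"
proof -
  have a: "(\<lambda>x. x + h) \<in> measurable (restrict_space borel K) (restrict_space borel K)"
    by (intro measurable_restrict_space2 borel_measurable_continuous_on_restrict cont_const_add)
       (use assms K_add in \<open>auto simp: space_restrict_space\<close>)
  have b: "(\<lambda>x. h + x) \<in> measurable (restrict_space borel K) (restrict_space borel K)"
    by (intro measurable_restrict_space2 borel_measurable_continuous_on_restrict cont_const_add)
       (use assms K_add in \<open>auto simp: space_restrict_space\<close>)
  show "(\<lambda>x. x + h) \<in> measurable m m" "(\<lambda>x. h + x) \<in> measurable m m"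
    using a b measurable_cong_sets[OF sets_m sets_m] by blast+
qed

lemma distr_right: assumes "h \<in> K" shows "distr m m (\<lambda>x. x + h) = m"
proof (rule measure_eqI)
  fix A assume A: "A \<in> sets (distr m m (\<lambda>x. x + h))"
  then have A': "A \<in> sets m" by simp
  have AK: "A \<subseteq> K" using sets.sets_into_space[OF A'] by simp
  have eq: "(\<lambda>x. x + h) -` A \<inter> space m = (\<lambda>x. x + - h) ` A"
  proof
    show "(\<lambda>x. x + h) -` A \<inter> space m \<subseteq> (\<lambda>x. x + - h) ` A"
    proof
      fix x assume "x \<in> (\<lambda>x. x + h) -` A \<inter> space m"
      then have "x + h \<in> A" by auto
      moreover have "x = (x + h) + - h" by (simp add: add.assoc)
      ultimately show "x \<in> (\<lambda>x. x + - h) ` A" by blast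
    qed
    show "(\<lambda>x. x + - h) ` A \<subseteq> (\<lambda>x. x + h) -` A \<inter> space m"
      using AK assms K_add K_neg by (auto simp del: add_uminus_conv_diff simp: add.assoc)
  qed
  have inv: "emeasure m ((\<lambda>x. x + - h) ` A) = emeasure m A"
    using haar A' K_neg[OF assms] unfolding normalized_haar_def by blast
  show "emeasure (distr m m (\<lambda>x. x + h)) A = emeasure m A"
  proof -
    have "emeasure (distr m m (\<lambda>x. x + h)) A = emeasure m ((\<lambda>x. x + h) -` A \<inter> space m)"
      by (rule emeasure_distr[OF tr_meas(1)[OF assms] A'])
    also have "\<dots> = emeasure m A" unfolding eq by (rule inv)
    finally show ?thesis .
  qed
qed simp

lemma distr_left: assumes "h \<in> K" shows "distr m m (\<lambda>x. h + x) = m"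
proof (rule measure_eqI)
  fix A assume A: "A \<in> sets (distr m m (\<lambda>x. h + x))"
  then have A': "A \<in> sets m" by simp
  have AK: "A \<subseteq> K" using sets.sets_into_space[OF A'] by simp
  have eq: "(\<lambda>x. h + x) -` A \<inter> space m = (\<lambda>x. - h + x) ` A"
  proof
    show "(\<lambda>x. h + x) -` A \<inter> space m \<subseteq> (\<lambda>x. - h + x) ` A"
    proof
      fix x assume "x \<in> (\<lambda>x. h + x) -` A \<inter> space m"
      then have "h + x \<in> A" by auto
      moreover have "x = - h + (h + x)" by (simp add: add.assoc[symmetric])
      ultimately show "x \<in> (\<lambda>x. - h + x) ` A" by blast
    qed
    show "(\<lambda>x. - h + x) ` A \<subseteq> (\<lambda>x. h + x) -` A \<inter> space m"
      using AK assms K_add K_neg by (auto simp del: add_uminus_conv_diff simp: add.assoc[symmetric])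
  qed
  have inv: "emeasure m ((\<lambda>x. - h + x) ` A) = emeasure m A"
    using haar A' K_neg[OF assms] unfolding normalized_haar_def by blast
  show "emeasure (distr m m (\<lambda>x. h + x)) A = emeasure m A"
  proof -
    have "emeasure (distr m m (\<lambda>x. h + x)) A = emeasure m ((\<lambda>x. h + x) -` A \<inter> space m)"
      by (rule emeasure_distr[OF tr_meas(2)[OF assms] A'])
    also have "\<dots> = emeasure m A" unfolding eq by (rule inv)
    finally show ?thesis .
  qed
qed simp

lemma int_right:
  fixes \<phi> :: "'g \<Rightarrow> complex"
  assumes "h \<in> K" "\<phi> \<in> borel_measurable m"
  shows "(\<integral>x. \<phi> (x + h) \<partial>m) = integral\<^sup>L m \<phi>"
  using integral_distr[OF tr_meas(1)[OF assms(1)] assms(2)] distr_right[OF assms(1)] by simp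

lemma int_left:
  fixes \<phi> :: "'g \<Rightarrow> complex"
  assumes "h \<in> K" "\<phi> \<in> borel_measurable m"
  shows "(\<integral>x. \<phi> (h + x) \<partial>m) = integral\<^sup>L m \<phi>"
  using integral_distr[OF tr_meas(2)[OF assms(1)] assms(2)] distr_left[OF assms(1)] by simp


lemma cont_slice:
  assumes "continuous_on (K \<times> K) g" "s \<in> K"
  shows "continuous_on K (\<lambda>t. g (s, t))"
  by (rule continuous_on_compose2[OF assms(1) continuous_on_Pair[OF continuous_on_const continuous_on_id]])
     (use assms(2) in auto)

lemma apx_meas:
  fixes g :: "'g \<times> 'g \<Rightarrow> complex"
  assumes "\<forall>s\<in>set ss. open (C s) \<and> s \<in> K" "continuous_on (K \<times> K) g"
  shows "apx C ss g \<in> borel_measurable (m \<Otimes>\<^sub>M m)"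
  using assms(1)
proof (induction ss)
  case Nil
  then show ?case by (simp add: apx.simps(1)[abs_def])
next
  case (Cons s ss)
  have s: "open (C s)" "s \<in> K" using Cons.prems by auto
  have eq: "apx C (s # ss) g = (\<lambda>p. if fst p \<in> C s then g (s, snd p) else apx C ss g p)"
    by (rule ext) simp
  have m1: "(\<lambda>p. g (s, snd p)) \<in> borel_measurable (m \<Otimes>\<^sub>M m)"
    using measurable_compose[OF measurable_snd[of m m] cont_meas[OF cont_slice[OF assms(2) s(2)]]] by simp
  have set: "{p \<in> space (m \<Otimes>\<^sub>M m). fst p \<in> C s} = (C s \<inter> K) \<times> K"
    by (auto simp: space_pair_measure)
  have CK: "C s \<inter> K \<in> sets m"
    unfolding sets_m sets_restrict_space using borel_open[OF s(1)] by blast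
  have "(C s \<inter> K) \<times> K \<in> sets (m \<Otimes>\<^sub>M m)"
    using CK by (intro pair_measureI) (auto intro: sets.top[of m, simplified])
  then show ?case unfolding eq
    using Cons by (intro measurable_If m1) (auto simp: set)
qed

lemma apx_close:
  fixes g :: "'g \<times> 'g \<Rightarrow> complex"
  assumes "\<forall>s\<in>set ss. \<forall>h\<in>C s \<inter> K. \<forall>t\<in>K. dist (g (h, t)) (g (s, t)) \<le> e"
    and "h \<in> K" "t \<in> K" "h \<in> (\<Union>s\<in>set ss. C s)"
  shows "dist (apx C ss g (h, t)) (g (h, t)) \<le> e"
  using assms(1,4)
proof (induction ss)
  case Nil then show ?case by simp
next
  case (Cons s ss)
  show ?case
  proof (cases "h \<in> C s")
    case True
    then show ?thesis using Cons.prems assms(2,3) by (simp add: dist_commute)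
  next
    case False
    then show ?thesis using Cons by simp
  qed
qed

lemma prod_meas:
  fixes g :: "'g \<times> 'g \<Rightarrow> complex"
  assumes g: "continuous_on (K \<times> K) g"
  shows "g \<in> borel_measurable (m \<Otimes>\<^sub>M m)"
proof -
  have "\<exists>G. G \<in> borel_measurable (m \<Otimes>\<^sub>M m) \<and> (\<forall>h\<in>K. \<forall>t\<in>K. dist (G (h, t)) (g (h, t)) \<le> 1 / Suc n)" for n
  proof -
    define e where "e = 1 / real (Suc n)"
    have e: "e > 0" by (simp add: e_def)
    have "\<forall>h0\<in>K. \<exists>X0. h0 \<in> X0 \<and> open X0 \<and> (\<forall>x\<in>X0 \<inter> K. \<forall>t\<in>K. dist (g (x, t)) (g (h0, t)) \<le> e)"
    proof
      fix h0 assume "h0 \<in> K"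
      obtain X0 where X0: "h0 \<in> X0" "open X0" "\<forall>x\<in>X0 \<inter> K. \<forall>t\<in>K. dist (g (x, t)) (g (h0, t)) \<le> e"
        by (rule continuous_on_prod_compactE[OF g K_compact \<open>h0 \<in> K\<close> e])
      then show "\<exists>X0. h0 \<in> X0 \<and> open X0 \<and> (\<forall>x\<in>X0 \<inter> K. \<forall>t\<in>K. dist (g (x, t)) (g (h0, t)) \<le> e)"
        by blast
    qed
    from bchoice[OF this] obtain C where C: "\<forall>h0\<in>K. h0 \<in> C h0 \<and> open (C h0) \<and> (\<forall>x\<in>C h0 \<inter> K. \<forall>t\<in>K. dist (g (x, t)) (g (h0, t)) \<le> e)"
      by blast
    have cov: "K \<subseteq> (\<Union>c\<in>K. C c)" using C by blast
    have opn: "\<And>T. T \<in> K \<Longrightarrow> open (C T)" using C by blast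
    obtain S where S: "S \<subseteq> K" "finite S" "K \<subseteq> (\<Union>c\<in>S. C c)"
      by (rule compactE_image[OF K_compact opn cov])
    obtain ss where ss: "set ss = S" using finite_list[OF S(2)] by blast
    have 1: "apx C ss g \<in> borel_measurable (m \<Otimes>\<^sub>M m)"
      using C S ss by (intro apx_meas g) auto
    have 2: "\<forall>h\<in>K. \<forall>t\<in>K. dist (apx C ss g (h, t)) (g (h, t)) \<le> e"
    proof (intro ballI)
      fix h t assume "h \<in> K" "t \<in> K"
      show "dist (apx C ss g (h, t)) (g (h, t)) \<le> e"
        by (rule apx_close) (use C S ss \<open>h \<in> K\<close> \<open>t \<in> K\<close> in auto)
    qed
    show ?thesis by (rule exI[of _ "apx C ss g"]) (use 1 2 in \<open>simp add: e_def\<close>)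
  qed
  then have "\<forall>n. \<exists>G. G \<in> borel_measurable (m \<Otimes>\<^sub>M m) \<and> (\<forall>h\<in>K. \<forall>t\<in>K. dist (G (h, t)) (g (h, t)) \<le> 1 / Suc n)" by blast
  from choice[OF this] obtain G where G': "\<forall>n. G n \<in> borel_measurable (m \<Otimes>\<^sub>M m) \<and> (\<forall>h\<in>K. \<forall>t\<in>K. dist (G n (h, t)) (g (h, t)) \<le> 1 / Suc n)"
    by blast
  have G: "\<And>n. G n \<in> borel_measurable (m \<Otimes>\<^sub>M m)"
    "\<And>n. \<forall>h\<in>K. \<forall>t\<in>K. dist (G n (h, t)) (g (h, t)) \<le> 1 / Suc n" using G' by auto
  show ?thesis
  proof (rule borel_measurable_LIMSEQ_metric[OF G(1)])
    fix p assume "p \<in> space (m \<Otimes>\<^sub>M m)"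
    then obtain h t where p: "p = (h, t)" "h \<in> K" "t \<in> K" by (auto simp: space_pair_measure)
    have "(\<lambda>n. dist (G n p) (g p)) \<longlonglongrightarrow> 0"
    proof (rule Lim_null_comparison)
      show "\<forall>\<^sub>F n in sequentially. norm (dist (G n p) (g p)) \<le> 1 / real (Suc n)"
        using G(2) p by (intro always_eventually) simp
      show "(\<lambda>n. 1 / real (Suc n)) \<longlonglongrightarrow> 0"
        using LIMSEQ_Suc[OF lim_1_over_n] by simp
    qed
    then show "(\<lambda>n. G n p) \<longlonglongrightarrow> g p" using tendsto_dist_iff by blast
  qed
qed

lemma prod_int:
  fixes g :: "'g \<times> 'g \<Rightarrow> complex"
  assumes g: "continuous_on (K \<times> K) g"
  shows "integrable (m \<Otimes>\<^sub>M m) g"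
proof -
  have "compact (g ` (K \<times> K))" using compact_continuous_image[OF g compact_Times[OF K_compact K_compact]] .
  then obtain B where B: "\<forall>y\<in>g ` (K \<times> K). norm y \<le> B" using compact_imp_bounded bounded_iff by metis
  have FM: "finite_measure (m \<Otimes>\<^sub>M m)"
    by (intro finite_measure_pair_measure) (simp_all add: P.M1.finite_measure_axioms)
  show ?thesis
    by (intro finite_measure.integrable_const_bound[OF FM, where B=B] prod_meas g) (use B in \<open>auto simp: space_pair_measure\<close>)
qed

lemma fubini_cont:
  fixes g :: "'g \<Rightarrow> 'g \<Rightarrow> complex"
  assumes g: "continuous_on (K \<times> K) (\<lambda>p. g (fst p) (snd p))"
  shows "integrable m (\<lambda>x. \<integral>y. g x y \<partial>m)" "integrable m (\<lambda>y. \<integral>x. g x y \<partial>m)"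
    "(\<integral>y. (\<integral>x. g x y \<partial>m) \<partial>m) = (\<integral>x. (\<integral>y. g x y \<partial>m) \<partial>m)"
proof -
  have i: "integrable (m \<Otimes>\<^sub>M m) (case_prod g)"
    using prod_int[OF g] by (simp add: case_prod_beta')
  show "integrable m (\<lambda>x. \<integral>y. g x y \<partial>m)" by (rule P.integrable_fst[OF i])
  show "integrable m (\<lambda>y. \<integral>x. g x y \<partial>m)" by (rule P.integrable_snd[OF i])
  show "(\<integral>y. (\<integral>x. g x y \<partial>m) \<partial>m) = (\<integral>x. (\<integral>y. g x y \<partial>m) \<partial>m)" by (rule P.Fubini_integral[OF i])
qed


lemma int_inv:
  fixes \<phi> :: "'g \<Rightarrow> complex"
  assumes phi: "continuous_on K \<phi>"
  shows "(\<integral>k. \<phi> (- k) \<partial>m) = integral\<^sup>L m \<phi>"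
proof -
  define g where "g = (\<lambda>h k. \<phi> (k + - h))"
  have gc: "continuous_on (K \<times> K) (\<lambda>p. g (fst p) (snd p))"
    unfolding g_def
    by (rule continuous_on_compose2[OF phi cont_add_g[OF lc continuous_on_snd cont_neg_g[OF lc continuous_on_fst]]])
       (auto intro!: K_add K_neg K_diff)
  have m\<phi>: "\<phi> \<in> borel_measurable m" by (rule cont_meas[OF phi])
  have inner1: "(\<integral>k. g h k \<partial>m) = integral\<^sup>L m \<phi>" if "h \<in> K" for h
    unfolding g_def by (rule int_right[OF K_neg[OF that] m\<phi>])
  have inner2: "(\<integral>h. g h k \<partial>m) = (\<integral>h. \<phi> (- h) \<partial>m)" if k: "k \<in> K" for k
  proof -
    have c: "continuous_on K (\<lambda>h. g h k)"
      unfolding g_def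
      by (rule continuous_on_compose2[OF phi cont_add_g[OF lc continuous_on_const cont_neg_g[OF lc continuous_on_id]]])
         (use k in \<open>auto intro!: K_add K_neg K_diff\<close>)
    have "(\<integral>h. g (h + k) k \<partial>m) = (\<integral>h. g h k \<partial>m)"
      by (rule int_right[OF k cont_meas[OF c]])
    moreover have "g (h + k) k = \<phi> (- h)" for h
    proof -
      have "k + - (h + k) = - h" by (metis add.assoc add.right_inverse add_0 minus_add)
      then show ?thesis unfolding g_def by simp
    qed
    ultimately show ?thesis by simp
  qed
  have "(\<integral>k. (\<integral>h. g h k \<partial>m) \<partial>m) = (\<integral>h. (\<integral>k. g h k \<partial>m) \<partial>m)"
    by (rule fubini_cont(3)[OF gc])
  also have "(\<integral>h. (\<integral>k. g h k \<partial>m) \<partial>m) = (\<integral>h. integral\<^sup>L m \<phi> \<partial>m)"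
    by (rule Bochner_Integration.integral_cong) (auto simp: inner1)
  also have "\<dots> = integral\<^sup>L m \<phi>" using P.M1.prob_space by simp
  also have "(\<integral>k. (\<integral>h. g h k \<partial>m) \<partial>m) = (\<integral>k. (\<integral>h. \<phi> (- h) \<partial>m) \<partial>m)"
    by (rule Bochner_Integration.integral_cong) (auto simp: inner2)
  also have "\<dots> = (\<integral>h. \<phi> (- h) \<partial>m)" using P.M1.prob_space by simp
  finally show ?thesis .
qed

end

locale setF = haarK K m for K :: "'g::{t2_space, group_add} set" and m +
  fixes chi mu f :: "'g \<Rightarrow> complex" and \<delta> :: real
  assumes uchi: "unitary_character_on K chi"
    and dpos: "\<delta> > 0"
    and gmu: "group_character mu" and bmu: "bounded (range mu)"
    and fcont0: "continuous_on UNIV f"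
    and binv: "\<forall>k\<in>K. \<forall>h\<in>K. \<forall>x. f (k + x + h) = chi k * f x * chi h"
    and hE: "\<forall>x y. cmod ((LINT k|m. f (x + k + y) * cnj (chi k))
                     + mu y * (LINT k|m. f (x + k + - y) * cnj (chi k))
                     - 2 * f x * f y) \<le> \<delta>"
    and unb: "\<not> bounded (range f)"
begin

definition Phi where "Phi a b = (LINT k|m. f (a + k + b) * cnj (chi k))"
definition T where "T a b c = (LINT k|m. cnj (chi k) * Phi (a + k + b) c)"

lemma hE': "cmod (Phi x y + mu y * Phi x (- y) - 2 * f x * f y) \<le> \<delta>"
  using hE unfolding Phi_def by blast

lemma unb_zero:
  assumes "\<forall>z. cmod (f z) * cmod w \<le> B"
  shows "w = 0"
proof (rule ccontr)
  assume "w \<noteq> 0"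
  then have "cmod w > 0" by simp
  then have "\<forall>z. cmod (f z) \<le> B / cmod w" using assms by (simp add: pos_le_divide_eq)
  then have "bounded (range f)" unfolding bounded_iff by blast
  then show False using unb by simp
qed

lemma chi_cont: "continuous_on K chi" using uchi by (simp add: unitary_character_on_def)
lemma chi_norm: "k \<in> K \<Longrightarrow> cmod (chi k) = 1" using uchi by (simp add: unitary_character_on_def)
lemma chi_add: "a \<in> K \<Longrightarrow> b \<in> K \<Longrightarrow> chi (a + b) = chi a * chi b" using uchi by (simp add: unitary_character_on_def)
lemma chi_cnj: "k \<in> K \<Longrightarrow> chi k * cnj (chi k) = 1"
  using complex_norm_square[of "chi k"] chi_norm by simp
lemma chi0: "chi 0 = 1"
proof -
  have "chi 0 = chi 0 * chi 0" using chi_add[OF K0 K0] by simp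
  moreover have "chi 0 \<noteq> 0" using chi_norm[OF K0] by auto
  ultimately show ?thesis using mult_cancel_left1[of "chi 0" "chi 0"] by simp
qed
lemma chi_neg: "k \<in> K \<Longrightarrow> chi (- k) = cnj (chi k)"
proof -
  assume k: "k \<in> K"
  have "chi k * chi (- k) = 1" using chi_add[OF k K_neg[OF k]] chi0 by simp
  moreover have "chi k \<noteq> 0" using chi_norm[OF k] by auto
  ultimately show ?thesis using chi_cnj[OF k] mult_left_cancel[of "chi k" "chi (- k)" "cnj (chi k)"] by simp
qed

lemma mu_cont: "continuous_on UNIV mu" using gmu by (simp add: group_character_def)
lemma mu_add: "mu (a + b) = mu a * mu b" using gmu by (simp add: group_character_def)
lemma mu_nz: "mu a \<noteq> 0" using gmu by (simp add: group_character_def)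
lemma mu0: "mu 0 = 1"
  using mu_add[of 0 0] mu_nz[of 0] mult_cancel_left1[of "mu 0" "mu 0"] by simp
lemma mu_inv: "mu a * mu (- a) = 1" using mu_add[of a "- a"] mu0 by simp

lemma mu_le1: "cmod (mu a) \<le> 1" for a
proof (rule ccontr)
  assume "\<not> cmod (mu a) \<le> 1"
  then have gt: "cmod (mu a) > 1" by simp
  obtain B where B: "\<forall>y. cmod (mu y) \<le> B" using bmu unfolding bounded_iff by auto
  define p where "p n = ((+) a ^^ n) 0" for n
  have "mu (p n) = mu a ^ n" for n
    by (induction n) (simp_all add: p_def mu0 mu_add)
  moreover obtain n where "B < cmod (mu a) ^ n" using real_arch_pow[OF gt] by blast
  ultimately have "B < cmod (mu (p n))" by (simp add: norm_power)
  then show False using B by (meson not_le)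
qed

lemma mu_norm: "cmod (mu a) = 1"
proof -
  have "cmod (mu a) * cmod (mu (- a)) = 1" using mu_inv[of a] by (metis norm_mult norm_one)
  moreover have "cmod (mu a) * cmod (mu (- a)) \<le> cmod (mu a)"
    by (rule mult_left_le[OF mu_le1 norm_ge_zero])
  ultimately show ?thesis using mu_le1[of a] by linarith
qed

lemma mu_cnj: "mu (- a) = cnj (mu a)"
proof -
  have "mu a * cnj (mu a) = 1" using complex_norm_square[of "mu a"] mu_norm by simp
  then show ?thesis using mu_inv[of a] mu_nz[of a] mult_left_cancel[of "mu a" "mu (- a)" "cnj (mu a)"] by simp
qed

lemma fcont: "continuous_on S u \<Longrightarrow> continuous_on S (\<lambda>x. f (u x))"
  by (rule continuous_on_compose2[OF fcont0]) auto
lemma chicont: "continuous_on S u \<Longrightarrow> u ` S \<subseteq> K \<Longrightarrow> continuous_on S (\<lambda>x. chi (u x))"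
  by (rule continuous_on_compose2[OF chi_cont])
lemmas addc = cont_add_g[OF lc]
lemmas negc = cont_neg_g[OF lc]

lemma phi_int: "integrable m (\<lambda>k. f (a + k + b) * cnj (chi k))"
  by (intro cont_int continuous_on_mult continuous_on_cnj fcont addc continuous_on_const continuous_on_id chi_cont)


end

context setF begin
lemma n2: "norm ((a::complex) + b) \<le> norm a + norm b" by (rule norm_triangle_ineq)
lemma n3: "norm ((a::complex) + b + c) \<le> norm a + norm b + norm c"
  using norm_triangle_ineq[of "a+b" c] norm_triangle_ineq[of a b] by linarith
lemma n4: "norm ((a::complex) + b + c + d) \<le> norm a + norm b + norm c + norm d"
  using norm_triangle_ineq[of "a+b+c" d] n3[of a b c] by linarith
lemma n5: "norm ((a::complex) + b + c + d + e) \<le> norm a + norm b + norm c + norm d + norm e"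
  using norm_triangle_ineq[of "a+b+c+d" e] n4[of a b c d] by linarith

lemma fk: assumes k: "k \<in> K" shows "f (k + x) = chi k * f x"
proof -
  have "f (k + x + 0) = chi k * f x * chi 0" using binv k K0 by blast
  then show ?thesis by (simp add: chi0)
qed
lemma fk': assumes k: "k \<in> K" shows "f (x + k) = f x * chi k"
proof -
  have "f (0 + x + k) = chi 0 * f x * chi k" using binv k K0 by blast
  then show ?thesis by (simp add: chi0)
qed

lemma Phi_a0: "Phi a 0 = f a"
proof -
  have "(LINT k|m. f (a + k + 0) * cnj (chi k)) = (LINT k|m. f a)"
    by (rule Bochner_Integration.integral_cong) (auto simp: fk' chi_cnj mult.assoc)
  then show ?thesis unfolding Phi_def using P.M1.prob_space by simp
qed

lemma Phi_0b: "Phi 0 b = f b"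
proof -
  have "(LINT k|m. f (0 + k + b) * cnj (chi k)) = (LINT k|m. f b)"
    by (rule Bochner_Integration.integral_cong) (auto simp: fk chi_cnj mult.commute mult.left_commute)
  then show ?thesis unfolding Phi_def using P.M1.prob_space by simp
qed

lemma f0: "f 0 = 1"
proof -
  have "\<forall>a. cmod (f a) * cmod (2 - 2 * f 0) \<le> \<delta>"
  proof
    fix a
    have "Phi a 0 + mu 0 * Phi a (- 0) - 2 * f a * f 0 = f a * (2 - 2 * f 0)"
      by (simp add: Phi_a0 mu0 algebra_simps)
    then show "cmod (f a) * cmod (2 - 2 * f 0) \<le> \<delta>" using hE'[of a 0] by (simp add: norm_mult)
  qed
  from unb_zero[OF this] show ?thesis by simp
qed

lemma refl_f: "cmod (mu w * f (- w) - f w) \<le> \<delta>"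
proof -
  have "Phi 0 w + mu w * Phi 0 (- w) - 2 * f 0 * f w = mu w * f (- w) - f w"
    by (simp add: Phi_0b f0)
  then show ?thesis using hE'[of 0 w] by simp
qed

lemma muchi: assumes k: "k \<in> K" shows "mu k * cnj (chi k) = chi k"
proof -
  have "\<forall>x. cmod (f x) * cmod (mu k * cnj (chi k) - chi k) \<le> 2 * \<delta>"
  proof
    fix x
    have A: "cmod (mu (k + x) * f (- (k + x)) - f (k + x)) \<le> \<delta>" by (rule refl_f)
    have e1: "f (- (k + x)) = f (- x) * cnj (chi k)"
      using fk'[OF K_neg[OF k], of "- x"] chi_neg[OF k] by (simp add: minus_add)
    have A': "cmod (mu k * mu x * f (- x) * cnj (chi k) - chi k * f x) \<le> \<delta>"
      using A by (simp add: e1 fk[OF k] mu_add mult.assoc)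
    have B: "cmod (mu k * cnj (chi k) * (mu x * f (- x) - f x)) \<le> \<delta>"
      using refl_f[of x] by (simp add: norm_mult mu_norm chi_norm[OF k])
    have "f x * (mu k * cnj (chi k) - chi k) = (mu k * mu x * f (- x) * cnj (chi k) - chi k * f x) - mu k * cnj (chi k) * (mu x * f (- x) - f x)"
      by (simp add: algebra_simps)
    then have "cmod (f x * (mu k * cnj (chi k) - chi k)) \<le> cmod (mu k * mu x * f (- x) * cnj (chi k) - chi k * f x) + cmod (mu k * cnj (chi k) * (mu x * f (- x) - f x))"
      by (metis norm_triangle_ineq4)
    then have "cmod (f x * (mu k * cnj (chi k) - chi k)) \<le> \<delta> + \<delta>"
      using A' B by linarith
    then show "cmod (f x) * cmod (mu k * cnj (chi k) - chi k) \<le> 2 * \<delta>" by (simp add: norm_mult)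
  qed
  from unb_zero[OF this] show ?thesis by simp
qed


lemma R2: "cmod (mu b * Phi a (- b) - mu a * Phi b (- a)) \<le> \<delta>"
proof -
  have c1: "continuous_on K (\<lambda>k. f (b + k + - a) * cnj (chi k))"
    by (intro continuous_on_mult continuous_on_cnj fcont addc continuous_on_const continuous_on_id chi_cont)
  have inv: "Phi b (- a) = (LINT k|m. f (b + - k + - a) * cnj (chi (- k)))"
    unfolding Phi_def using int_inv[OF c1] by simp
  have i1: "integrable m (\<lambda>k. mu b * (f (a + k + - b) * cnj (chi k)))"
    by (intro integrable_mult_right phi_int)
  have i2: "integrable m (\<lambda>k. mu a * (f (b + - k + - a) * cnj (chi (- k))))"
    by (intro integrable_mult_right cont_int continuous_on_mult continuous_on_cnj fcont addc negc continuous_on_const continuous_on_id chicont)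
       (auto intro: K_neg)
  have pw: "cmod (mu b * (f (a + k + - b) * cnj (chi k)) - mu a * (f (b + - k + - a) * cnj (chi (- k)))) \<le> \<delta>"
    if k: "k \<in> K" for k
  proof -
    define w where "w = a + k + - b"
    have nw: "- w = b + - k + - a" unfolding w_def by (simp only: minus_add minus_minus add.assoc)
    have muw: "mu w = mu a * mu k * mu (- b)" unfolding w_def by (simp only: mu_add)
    have eq: "mu b * (f w * cnj (chi k)) - mu a * (f (- w) * chi k) = mu b * cnj (chi k) * (f w - mu w * f (- w))"
    proof -
      have "mu b * cnj (chi k) * (f w - mu w * f (- w)) = mu b * cnj (chi k) * f w - (mu b * mu (- b)) * mu a * (mu k * cnj (chi k)) * f (- w)"
        by (simp add: muw algebra_simps)
      also have "\<dots> = mu b * (f w * cnj (chi k)) - mu a * (f (- w) * chi k)"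
        by (simp add: mu_inv muchi[OF k] algebra_simps)
      finally show ?thesis by simp
    qed
    have bnd: "cmod (mu b * cnj (chi k) * (f w - mu w * f (- w))) \<le> \<delta>"
      using refl_f[of w] by (simp add: norm_mult mu_norm chi_norm[OF k] norm_minus_commute)
    show ?thesis unfolding w_def[symmetric] nw[symmetric] chi_neg[OF k] complex_cnj_cnj eq by (rule bnd)
  qed
  have "cmod ((LINT k|m. mu b * (f (a + k + - b) * cnj (chi k))) - (LINT k|m. mu a * (f (b + - k + - a) * cnj (chi (- k))))) \<le> \<delta>"
    by (rule int_diff_bound[OF i1 i2]) (use pw dpos in auto)
  then show ?thesis unfolding inv by (simp add: Phi_def)
qed

lemma R1: "cmod (Phi a b - Phi b a) \<le> 3 * \<delta>"
proof -
  have eq: "Phi a b - Phi b a = (Phi a b + mu b * Phi a (- b) - 2 * f a * f b) - (Phi b a + mu a * Phi b (- a) - 2 * f b * f a) - (mu b * Phi a (- b) - mu a * Phi b (- a))"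
    by (simp add: algebra_simps)
  have "cmod (Phi a b - Phi b a) \<le> cmod (Phi a b + mu b * Phi a (- b) - 2 * f a * f b) + cmod (Phi b a + mu a * Phi b (- a) - 2 * f b * f a) + cmod (mu b * Phi a (- b) - mu a * Phi b (- a))"
    unfolding eq using norm_triangle_ineq4[of "(Phi a b + mu b * Phi a (- b) - 2 * f a * f b) - (Phi b a + mu a * Phi b (- a) - 2 * f b * f a)" "mu b * Phi a (- b) - mu a * Phi b (- a)"]
      norm_triangle_ineq4[of "Phi a b + mu b * Phi a (- b) - 2 * f a * f b" "Phi b a + mu a * Phi b (- a) - 2 * f b * f a"]
    by linarith
  then show ?thesis using hE'[of a b] hE'[of b a] R2[of b a] by linarith
qed


lemma T_fub:
  shows "integrable m (\<lambda>k. cnj (chi k) * Phi (a + k + b) c)"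
    "integrable m (\<lambda>k. cnj (chi k) * Phi a (b + k + c))"
    "T a b c = (LINT k|m. cnj (chi k) * Phi a (b + k + c))"
proof -
  define g where "g x y = f (a + x + b + y + c) * cnj (chi y) * cnj (chi x)" for x y
  have gc: "continuous_on (K \<times> K) (\<lambda>p. g (fst p) (snd p))"
    unfolding g_def
    by (intro continuous_on_mult continuous_on_cnj fcont addc continuous_on_const continuous_on_fst continuous_on_snd chicont)
       auto
  have e1: "(\<lambda>x. \<integral>y. g x y \<partial>m) = (\<lambda>x. cnj (chi x) * Phi (a + x + b) c)"
  proof
    fix x
    have "(\<lambda>y. g x y) = (\<lambda>y. cnj (chi x) * (f (a + x + b + y + c) * cnj (chi y)))"
      by (rule ext) (simp add: g_def mult.commute mult.left_commute)
    then show "(\<integral>y. g x y \<partial>m) = cnj (chi x) * Phi (a + x + b) c"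
      by (simp add: Phi_def del: integral_mult_left_zero)
  qed
  have e2: "(\<lambda>y. \<integral>x. g x y \<partial>m) = (\<lambda>y. cnj (chi y) * Phi a (b + y + c))"
  proof
    fix y
    have "(\<lambda>x. g x y) = (\<lambda>x. cnj (chi y) * (f (a + x + (b + y + c)) * cnj (chi x)))"
      by (rule ext) (simp add: g_def add.assoc mult.commute mult.left_commute)
    then show "(\<integral>x. g x y \<partial>m) = cnj (chi y) * Phi a (b + y + c)"
      by (simp add: Phi_def del: integral_mult_left_zero)
  qed
  show "integrable m (\<lambda>k. cnj (chi k) * Phi (a + k + b) c)"
    using fubini_cont(1)[OF gc] unfolding e1 .
  show "integrable m (\<lambda>k. cnj (chi k) * Phi a (b + k + c))"
    using fubini_cont(2)[OF gc] unfolding e2 .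
  show "T a b c = (LINT k|m. cnj (chi k) * Phi a (b + k + c))"
    using fubini_cont(3)[OF gc] unfolding e1 e2 T_def by simp
qed

lemma cyc: "cmod (T a b c - T b c a) \<le> 3 * \<delta>"
proof -
  have "cmod ((LINT k|m. cnj (chi k) * Phi a (b + k + c)) - (LINT k|m. cnj (chi k) * Phi (b + k + c) a)) \<le> 3 * \<delta>"
  proof (rule int_diff_bound[OF T_fub(2) T_fub(1)])
    show "\<forall>k\<in>K. cmod (cnj (chi k) * Phi a (b + k + c) - cnj (chi k) * Phi (b + k + c) a) \<le> 3 * \<delta>"
    proof
      fix k assume k: "k \<in> K"
      have "cnj (chi k) * Phi a (b + k + c) - cnj (chi k) * Phi (b + k + c) a = cnj (chi k) * (Phi a (b + k + c) - Phi (b + k + c) a)"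
        by (simp add: algebra_simps)
      then show "cmod (cnj (chi k) * Phi a (b + k + c) - cnj (chi k) * Phi (b + k + c) a) \<le> 3 * \<delta>"
        using R1[of a "b + k + c"] by (simp add: norm_mult chi_norm[OF k])
    qed
    show "0 \<le> 3 * \<delta>" using dpos by simp
  qed
  then show ?thesis by (simp add: T_fub(3)[of a b c] T_def[of b c a])
qed

lemma TE: "cmod (T a b c + mu c * T a b (- c) - 2 * f c * Phi a b) \<le> \<delta>"
proof -
  have i1: "integrable m (\<lambda>k. cnj (chi k) * Phi (a + k + b) c + mu c * (cnj (chi k) * Phi (a + k + b) (- c)))"
    by (intro Bochner_Integration.integrable_add integrable_mult_right T_fub(1))
  have i2: "integrable m (\<lambda>k. 2 * f c * (f (a + k + b) * cnj (chi k)))"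
    by (intro integrable_mult_right phi_int)
  have h1: "cmod ((LINT k|m. cnj (chi k) * Phi (a + k + b) c + mu c * (cnj (chi k) * Phi (a + k + b) (- c)))
      - (LINT k|m. 2 * f c * (f (a + k + b) * cnj (chi k)))) \<le> \<delta>"
  proof (rule int_diff_bound[OF i1 i2])
    show "\<forall>k\<in>K. cmod (cnj (chi k) * Phi (a + k + b) c + mu c * (cnj (chi k) * Phi (a + k + b) (- c)) - 2 * f c * (f (a + k + b) * cnj (chi k))) \<le> \<delta>"
    proof
      fix k assume k: "k \<in> K"
      have "cnj (chi k) * Phi (a + k + b) c + mu c * (cnj (chi k) * Phi (a + k + b) (- c)) - 2 * f c * (f (a + k + b) * cnj (chi k))
          = cnj (chi k) * (Phi (a + k + b) c + mu c * Phi (a + k + b) (- c) - 2 * f (a + k + b) * f c)"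
        by (simp add: algebra_simps)
      then show "cmod (cnj (chi k) * Phi (a + k + b) c + mu c * (cnj (chi k) * Phi (a + k + b) (- c)) - 2 * f c * (f (a + k + b) * cnj (chi k))) \<le> \<delta>"
        using hE'[of "a + k + b" c] by (simp add: norm_mult chi_norm[OF k])
    qed
    show "0 \<le> \<delta>" using dpos by simp
  qed
  have h2: "(LINT k|m. cnj (chi k) * Phi (a + k + b) c + mu c * (cnj (chi k) * Phi (a + k + b) (- c)))
      = T a b c + mu c * T a b (- c)"
    by (simp add: T_def Bochner_Integration.integral_add T_fub(1))
  have h3: "(LINT k|m. 2 * f c * (f (a + k + b) * cnj (chi k))) = 2 * f c * Phi a b"
    by (simp add: Phi_def)
  show ?thesis using h1 unfolding h2 h3 .
qed

lemma MI: "cmod (T x y w + mu y * T x (- y) w - 2 * f y * Phi x w) \<le> 13 * \<delta> + 6 * \<delta> * cmod (f y)"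
proof -
  have c1: "cmod (T x y w - T w x y) \<le> 6 * \<delta>"
    using cyc[of x y w] cyc[of y w x] norm_triangle_ineq[of "T x y w - T y w x" "T y w x - T w x y"] by simp
  have c2: "cmod (T x (- y) w - T w x (- y)) \<le> 6 * \<delta>"
    using cyc[of x "- y" w] cyc[of "- y" w x] norm_triangle_ineq[of "T x (- y) w - T (- y) w x" "T (- y) w x - T w x (- y)"] by simp
  have c3: "cmod (mu y * (T x (- y) w - T w x (- y))) \<le> 6 * \<delta>"
    using c2 by (simp add: norm_mult mu_norm)
  have c4: "cmod (2 * f y * (Phi w x - Phi x w)) \<le> 6 * \<delta> * cmod (f y)"
  proof -
    have "cmod (2 * f y * (Phi w x - Phi x w)) = 2 * cmod (f y) * cmod (Phi w x - Phi x w)" by (simp add: norm_mult)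
    also have "\<dots> \<le> 2 * cmod (f y) * (3 * \<delta>)" by (intro mult_left_mono R1) simp
    also have "\<dots> = 6 * \<delta> * cmod (f y)" by simp
    finally show ?thesis .
  qed
  have eq: "T x y w + mu y * T x (- y) w - 2 * f y * Phi x w
    = (T x y w - T w x y) + mu y * (T x (- y) w - T w x (- y)) + (T w x y + mu y * T w x (- y) - 2 * f y * Phi w x) + 2 * f y * (Phi w x - Phi x w)"
    by (simp add: algebra_simps)
  show ?thesis unfolding eq
    using n4[of "T x y w - T w x y" "mu y * (T x (- y) w - T w x (- y))" "T w x y + mu y * T w x (- y) - 2 * f y * Phi w x" "2 * f y * (Phi w x - Phi x w)"]
      c1 c3 c4 TE[of w x y] by linarith
qed

lemma main: "Phi x y + mu y * Phi x (- y) - 2 * f x * f y = 0"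
proof -
  define M where "M = 13 * \<delta> + 6 * \<delta> * cmod (f y)"
  define N where "N = 2 * cmod (f y) * \<delta>"
  have "\<forall>z. cmod (f z) * cmod (Phi x y + mu y * Phi x (- y) - 2 * f x * f y) \<le> (2 * \<delta> + 2 * M + N) / 2"
  proof
    fix z
    define e1 where "e1 = T x y z + mu z * T x y (- z) - 2 * f z * Phi x y"
    define e2 where "e2 = T x (- y) z + mu z * T x (- y) (- z) - 2 * f z * Phi x (- y)"
    define e3 where "e3 = T x y z + mu y * T x (- y) z - 2 * f y * Phi x z"
    define e4 where "e4 = T x y (- z) + mu y * T x (- y) (- z) - 2 * f y * Phi x (- z)"
    define e5 where "e5 = Phi x z + mu z * Phi x (- z) - 2 * f x * f z"
    have eq: "2 * f z * (Phi x y + mu y * Phi x (- y) - 2 * f x * f y) = - e1 + (- mu y * e2) + e3 + mu z * e4 + 2 * f y * e5"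
      unfolding e1_def e2_def e3_def e4_def e5_def by (simp add: algebra_simps)
    have b1: "cmod (- e1) \<le> \<delta>" unfolding norm_minus_cancel e1_def by (rule TE)
    have "cmod (- mu y * e2) = cmod e2" by (simp add: norm_mult mu_norm)
    then have b2: "cmod (- mu y * e2) \<le> \<delta>" unfolding e2_def using TE[of x "- y" z] by simp
    have b3: "cmod e3 \<le> M" unfolding e3_def M_def by (rule MI)
    have "cmod (mu z * e4) = cmod e4" by (simp add: norm_mult mu_norm)
    then have b4: "cmod (mu z * e4) \<le> M" unfolding e4_def M_def using MI[of x y "- z"] by simp
    have b5: "cmod (2 * f y * e5) \<le> N"
    proof -
      have "cmod (2 * f y * e5) = 2 * cmod (f y) * cmod e5" by (simp add: norm_mult)
      also have "\<dots> \<le> 2 * cmod (f y) * \<delta>" unfolding e5_def by (intro mult_left_mono hE') simp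
      finally show ?thesis unfolding N_def .
    qed
    have "cmod (2 * f z * (Phi x y + mu y * Phi x (- y) - 2 * f x * f y)) \<le> 2 * \<delta> + 2 * M + N"
      unfolding eq using n5[of "- e1" "- mu y * e2" e3 "mu z * e4" "2 * f y * e5"] b1 b2 b3 b4 b5 by linarith
    then show "cmod (f z) * cmod (Phi x y + mu y * Phi x (- y) - 2 * f x * f y) \<le> (2 * \<delta> + 2 * M + N) / 2"
      by (simp add: norm_mult)
  qed
  then show ?thesis by (rule unb_zero)
qed

end


theorem corollary5p8:
  fixes K :: "'g::{t2_space, group_add} set" and m :: "'g measure"
    and chi mu f :: "'g \<Rightarrow> complex" and \<delta> :: real
  assumes "lc_group TYPE('g)"
    and "compact_subgroup K"
    and "normalized_haar K m"
    and "unitary_character_on K chi"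
    and "\<delta> > 0"
    and "group_character mu" and "bounded (range mu)"
    and "continuous_on UNIV f"
    and "\<forall>k\<in>K. \<forall>h\<in>K. \<forall>x. f (k + x + h) = chi k * f x * chi h"
    and "\<forall>x y. cmod ((LINT k|m. f (x + k + y) * cnj (chi k))
                     + mu y * (LINT k|m. f (x + k + - y) * cnj (chi k))
                     - 2 * f x * f y) \<le> \<delta>"
  shows "bounded (range f) \<or>
         (\<forall>x y. (LINT k|m. f (x + k + y) * cnj (chi k))
                + mu y * (LINT k|m. f (x + k + - y) * cnj (chi k))
                = 2 * f x * f y)"
proof (cases "bounded (range f)")
  case True
  then show ?thesis by simp
next
  case False
  interpret S: setF K m chi mu f \<delta>
    unfolding setF_def haarK_def setF_axioms_def using assms False by blast
  have "\<forall>x y. S.Phi x y + mu y * S.Phi x (- y) = 2 * f x * f y"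
  proof (intro allI)
    fix x y
    show "S.Phi x y + mu y * S.Phi x (- y) = 2 * f x * f y"
      using S.main[of x y] by (simp only: right_minus_eq)
  qed
  then have "\<forall>x y. (LINT k|m. f (x + k + y) * cnj (chi k))
                + mu y * (LINT k|m. f (x + k + - y) * cnj (chi k))
                = 2 * f x * f y" unfolding S.Phi_def .
  then show ?thesis by (rule disjI2)
qed

end
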